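(* Let $f,g\in\mathcal{H}$ with $f\neq g$ as germs. Then there is no real $M>0$ such that $|f(x)|\le M|g(x)|$ and $|g(x)|\le M|f(x)|$ hold for all sufficiently large $x$.
   Context: All functions are real-valued functions defined on some interval $(a,\infty)$. Two such functions are identified if they agree for all sufficiently large $x$; these equivalence classes are germs at $+\infty$. Write $\ln^{(k)}$ for the $k$-fold iterated natural logarithm, with $\ln^{(0)}(x)=x$. Let $\mathcal{H}$ be the smallest set of germs at $+\infty$ satisfying: (i) $\ln^{(k)}\in\mathcal{H}$ for every integer $k\ge0$; (ii) if $f\in\mathcal{H}$, then $\exp\circ f\in\mathcal{H}$, and if moreover $f$ is eventually positive, then $f^\alpha\in\mathcal{H}$ for every real $\alpha>0$; (iii) if $f,g\in\mathcal{H}$ and $f\ne g$ (as germs), then $fg\in\mathcal{H}$; (iv) if $f,g\in\mathcal{H}$ and $f(x)/g(x)\to+\infty$, then $f/g\in\mathcal{H}$. Two functions $f,g$ lie in the same Archimedean class ("commutative big O", $f=O(g)$) if there is $M>0$ with $|f(x)|\le M|g(x)|$ and $|g(x)|\le M|f(x)|$ for all large $x$. *)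

theory Defs
  imports "HOL-Analysis.Analysis"
begin

text \<open>Germs at +infinity are represented by functions real => real; two functions
  represent the same germ iff they agree eventually (filter at_top).\<close>

definition same_germ :: "(real \<Rightarrow> real) \<Rightarrow> (real \<Rightarrow> real) \<Rightarrow> bool" where
  "same_germ f g \<longleftrightarrow> (\<forall>\<^sub>F x in at_top. f x = g x)"

inductive Hclass :: "(real \<Rightarrow> real) \<Rightarrow> bool" where
  iter_ln: "Hclass (ln ^^ k)"
| exp_comp: "Hclass f \<Longrightarrow> Hclass (\<lambda>x. exp (f x))"
| pow: "Hclass f \<Longrightarrow> (\<forall>\<^sub>F x in at_top. f x > 0) \<Longrightarrow> \<alpha> > 0 \<Longrightarrow> Hclass (\<lambda>x. f x powr \<alpha>)"
| mult: "Hclass f \<Longrightarrow> Hclass g \<Longrightarrow> \<not> same_germ f g \<Longrightarrow> Hclass (\<lambda>x. f x * g x)"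
| divide: "Hclass f \<Longrightarrow> Hclass g \<Longrightarrow> filterlim (\<lambda>x. f x / g x) at_top at_top
            \<Longrightarrow> Hclass (\<lambda>x. f x / g x)"
| germ: "Hclass f \<Longrightarrow> same_germ f g \<Longrightarrow> Hclass g"

end

theory Submission imports Defs "HOL-Real_Asymp.Real_Asymp" begin


lemma sg_refl: "same_germ f f" by (simp add: same_germ_def)
lemma sg_sym: "same_germ f g \<Longrightarrow> same_germ g f"
  unfolding same_germ_def by (auto elim: eventually_mono)
lemma sg_trans: "same_germ f g \<Longrightarrow> same_germ g h \<Longrightarrow> same_germ f h"
  unfolding same_germ_def by (auto elim: eventually_elim2)

lemma top_pos: "filterlim (f::real\<Rightarrow>real) at_top at_top \<Longrightarrow> \<forall>\<^sub>F x in at_top. f x > 0"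
  unfolding filterlim_at_top_dense by blast

inductive Hd :: "nat \<Rightarrow> (real \<Rightarrow> real) \<Rightarrow> bool" where
  hd_ln: "Hd n (ln ^^ k)"
| hd_exp: "Hd n f \<Longrightarrow> Hd (Suc n) (\<lambda>x. exp (f x))"
| hd_pow: "Hd n f \<Longrightarrow> (\<forall>\<^sub>F x in at_top. f x > 0) \<Longrightarrow> \<alpha> > 0 \<Longrightarrow> Hd (Suc n) (\<lambda>x. f x powr \<alpha>)"
| hd_mult: "Hd n f \<Longrightarrow> Hd n g \<Longrightarrow> Hd (Suc n) (\<lambda>x. f x * g x)"
| hd_div: "Hd n f \<Longrightarrow> Hd n g \<Longrightarrow> filterlim (\<lambda>x. f x / g x) at_top at_top \<Longrightarrow> Hd (Suc n) (\<lambda>x. f x / g x)"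
| hd_germ: "Hd n f \<Longrightarrow> same_germ f g \<Longrightarrow> Hd n g"
| hd_suc: "Hd n f \<Longrightarrow> Hd (Suc n) f"

lemma hd_mono: assumes "Hd n f" "n \<le> m" shows "Hd m f"
  using assms(2,1) by (induction m rule: dec_induct) (auto intro: hd_suc)

lemma Hclass_Hd: "Hclass f \<Longrightarrow> \<exists>n. Hd n f"
proof (induction rule: Hclass.induct)
  case (iter_ln k) then show ?case by (blast intro: hd_ln)
next
  case (exp_comp f) then show ?case by (blast intro: hd_exp)
next
  case (pow f \<alpha>) then show ?case by (blast intro: hd_pow)
next
  case (mult f g)
  then obtain n m where "Hd n f" "Hd m g" by blast
  then have "Hd (max n m) f" "Hd (max n m) g" by (auto intro: hd_mono)
  then show ?case by (blast intro: hd_mult)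
next
  case (divide f g)
  then obtain n m where "Hd n f" "Hd m g" by blast
  then have "Hd (max n m) f" "Hd (max n m) g" by (auto intro: hd_mono)
  then show ?case using divide by (blast intro: hd_div)
next
  case (germ f g) then show ?case by (blast intro: hd_germ)
qed

lemma ln_iter_top: "filterlim (ln ^^ k :: real \<Rightarrow> real) at_top at_top"
proof (induction k)
  case 0 then show ?case by (simp add: filterlim_ident id_def)
next
  case (Suc k)
  have "filterlim (\<lambda>x::real. ln ((ln ^^ k) x)) at_top at_top"
    by (intro filterlim_compose[OF ln_at_top] Suc)
  then show ?case by (simp add: o_def)
qed

lemma Hd_top: "Hd n f \<Longrightarrow> filterlim f at_top at_top"
proof (induction rule: Hd.induct)
  case (hd_ln n k) then show ?case by (rule ln_iter_top)
next
  case (hd_exp n f) from hd_exp.IH show ?case by (rule filterlim_compose[OF exp_at_top])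
next
  case (hd_pow n f \<alpha>)
  have "filterlim (\<lambda>y::real. y powr \<alpha>) at_top at_top" using hd_pow by real_asymp
  from this hd_pow.IH show ?case by (rule filterlim_compose)
next
  case (hd_mult n f g) from hd_mult.IH show ?case by (rule filterlim_at_top_mult_at_top)
next
  case (hd_div n f g) then show ?case by simp
next
  case (hd_germ n f g) then show ?case
    using filterlim_cong[OF refl refl, of f g at_top] unfolding same_germ_def by blast
next
  case (hd_suc n f) then show ?case by simp
qed

lemma Hd_zero: "Hd n f \<Longrightarrow> n = 0 \<Longrightarrow> \<exists>k. same_germ (ln ^^ k) f"
  by (induction rule: Hd.induct) (auto intro: sg_refl sg_trans)

lemma ln_iter_le: "\<forall>\<^sub>F y in at_top. (ln ^^ m) y \<le> (y::real)"
proof (induction m)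
  case 0 then show ?case by simp
next
  case (Suc m)
  from Suc top_pos[OF ln_iter_top[of m]] show ?case
  proof eventually_elim
    case (elim y)
    then show ?case using ln_le_minus_one[of "(ln ^^ m) y"] by simp
  qed
qed

lemma ratio_R: "filterlim (\<lambda>y::real. y / (ln ^^ Suc m) y) at_top at_top"
proof (rule filterlim_at_top_mono)
  show "filterlim (\<lambda>y::real. y / ln y) at_top at_top" by real_asymp
  have gt: "\<forall>\<^sub>F y in at_top. (ln ^^ m) y > (1::real)"
    using ln_iter_top[of m] unfolding filterlim_at_top_dense by blast
  from gt ln_iter_le[of m] eventually_gt_at_top[of "1::real"]
  show "\<forall>\<^sub>F y in at_top. y / ln y \<le> (y::real) / (ln ^^ Suc m) y"
  proof eventually_elim
    case (elim y)
    have p: "0 < ln ((ln ^^ m) y)" using elim by simp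
    have "ln ((ln ^^ m) y) \<le> ln y" using elim by simp
    then show ?case using p elim by (simp add: frac_le)
  qed
qed

lemma ratio_iter: "k < j \<Longrightarrow> filterlim (\<lambda>x::real. (ln ^^ k) x / (ln ^^ j) x) at_top at_top"
proof -
  assume "k < j"
  then obtain m where "j = Suc (k + m)" by (auto simp: less_iff_Suc_add)
  then have j: "j = Suc m + k" by simp
  have "filterlim (\<lambda>x::real. (\<lambda>y::real. y / (ln ^^ Suc m) y) ((ln ^^ k) x)) at_top at_top"
    by (rule filterlim_compose[OF ratio_R ln_iter_top])
  then show ?thesis unfolding j funpow_add by (simp add: o_def)
qed



definition cmp :: "(real \<Rightarrow> real) \<Rightarrow> (real \<Rightarrow> real) \<Rightarrow> bool" where
  "cmp f g \<longleftrightarrow> filterlim (\<lambda>x. f x / g x) at_top at_top \<or> ((\<lambda>x. f x / g x) \<longlongrightarrow> 0) at_top \<or> same_germ f g"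

lemma cmp_germ: assumes "cmp f g" "same_germ f f'" "same_germ g g'" shows "cmp f' g'"
proof -
  have e: "\<forall>\<^sub>F x in at_top. f x / g x = f' x / g' x"
    using assms(2,3) unfolding same_germ_def by eventually_elim simp
  show ?thesis using assms(1) filterlim_cong[OF refl refl e] tendsto_cong[OF e]
    sg_trans[OF sg_trans[OF sg_sym[OF assms(2)]] assms(3)] unfolding cmp_def by blast
qed

lemma base_cmp: "cmp (ln ^^ k) (ln ^^ j)"
proof -
  consider "k = j" | "k < j" | "j < k" by linarith
  then show ?thesis
  proof cases
    case 1 then show ?thesis by (simp add: cmp_def sg_refl)
  next
    case 2 then show ?thesis using ratio_iter[of k j] by (simp add: cmp_def)
  next
    case 3
    have "((\<lambda>x::real. inverse ((ln ^^ j) x / (ln ^^ k) x)) \<longlongrightarrow> 0) at_top"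
      by (rule tendsto_inverse_0_at_top[OF ratio_iter[OF 3]])
    then show ?thesis by (simp add: cmp_def)
  qed
qed

definition lsum :: "(real \<times> (real \<Rightarrow> real)) list \<Rightarrow> real \<Rightarrow> real" where
  "lsum xs x = (\<Sum>p\<leftarrow>xs. fst p * snd p x)"

lemma lsum_Nil[simp]: "lsum [] x = 0" by (simp add: lsum_def)
lemma lsum_Cons[simp]: "lsum (p # xs) x = fst p * snd p x + lsum xs x" by (simp add: lsum_def)
lemma lsum_append[simp]: "lsum (xs @ ys) x = lsum xs x + lsum ys x" by (induction xs) auto
lemma lsum_scale: "lsum (map (\<lambda>p. (a * fst p, snd p)) xs) x = a * lsum xs x"
  by (induction xs) (auto simp: algebra_simps)

definition LinL :: "((real \<Rightarrow> real) \<Rightarrow> bool) \<Rightarrow> (real \<Rightarrow> real) \<Rightarrow> bool" where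
  "LinL P w \<longleftrightarrow> (\<exists>xs. (\<forall>p\<in>set xs. P (snd p)) \<and> (\<forall>\<^sub>F x in at_top. w x = lsum xs x))"

lemma LinL_single: "P h \<Longrightarrow> (\<forall>\<^sub>F x in at_top. w x = c * h x) \<Longrightarrow> LinL P w"
  unfolding LinL_def by (rule exI[of _ "[(c,h)]"]) auto

lemma LinL_add: assumes "LinL P u" "LinL P v" "\<forall>\<^sub>F x in at_top. w x = u x + v x" shows "LinL P w"
proof -
  obtain xs ys where a: "\<forall>p\<in>set xs. P (snd p)" and b: "\<forall>\<^sub>F x in at_top. u x = lsum xs x"
    and c: "\<forall>p\<in>set ys. P (snd p)" and d: "\<forall>\<^sub>F x in at_top. v x = lsum ys x"
    using assms(1,2) unfolding LinL_def by blast
  from b d assms(3) have "\<forall>\<^sub>F x in at_top. w x = lsum (xs @ ys) x" by eventually_elim simp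
  then show ?thesis unfolding LinL_def using a c
    by (intro exI[of _ "xs @ ys"]) auto
qed

lemma LinL_scale: assumes "LinL P u" "\<forall>\<^sub>F x in at_top. w x = a * u x" shows "LinL P w"
proof -
  obtain xs where a: "\<forall>p\<in>set xs. P (snd p)" and b: "\<forall>\<^sub>F x in at_top. u x = lsum xs x"
    using assms(1) unfolding LinL_def by blast
  from b assms(2) have "\<forall>\<^sub>F x in at_top. w x = lsum (map (\<lambda>p. (a * fst p, snd p)) xs) x"
    by eventually_elim (simp add: lsum_scale)
  then show ?thesis unfolding LinL_def using a
    by (intro exI[of _ "map (\<lambda>p. (a * fst p, snd p)) xs"]) auto
qed

lemma LinL_mono: "LinL P w \<Longrightarrow> (\<And>h. P h \<Longrightarrow> Q h) \<Longrightarrow> LinL Q w"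
  unfolding LinL_def by blast

lemma lsum_split: "\<forall>\<^sub>F x in at_top. lsum rest x = (\<Sum>p\<leftarrow>filter (\<lambda>p. same_germ (snd p) h) rest. fst p) * h x
   + lsum (filter (\<lambda>p. \<not> same_germ (snd p) h) rest) x"
proof (induction rest)
  case Nil then show ?case by simp
next
  case (Cons p rest)
  show ?case
  proof (cases "same_germ (snd p) h")
    case True
    from Cons True[unfolded same_germ_def] show ?thesis
      by eventually_elim (simp add: True algebra_simps)
  next
    case False
    from Cons show ?thesis by eventually_elim (simp add: False algebra_simps)
  qed
qed



lemma G:
  assumes top: "\<And>h. P h \<Longrightarrow> filterlim h at_top at_top"
    and cm: "\<And>f g. P f \<Longrightarrow> P g \<Longrightarrow> cmp f g"
  shows "(\<forall>p\<in>set xs. P (snd p)) \<Longrightarrow> (\<forall>\<^sub>F x in at_top. lsum xs x = 0) \<or>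
     (\<exists>c h. c \<noteq> 0 \<and> h \<in> snd ` set xs \<and> ((\<lambda>x. lsum xs x / h x) \<longlongrightarrow> c) at_top)"
proof (induction xs rule: length_induct)
  case (1 xs)
  show ?case
  proof (cases xs)
    case Nil then show ?thesis by simp
  next
    case (Cons a rest)
    obtain c h where a: "a = (c, h)" by fastforce
    define Os where "Os = filter (\<lambda>p. \<not> same_germ (snd p) h) rest"
    define C where "C = c + (\<Sum>p\<leftarrow>filter (\<lambda>p. same_germ (snd p) h) rest. fst p)"
    have ev: "\<forall>\<^sub>F x in at_top. lsum xs x = C * h x + lsum Os x"
      using lsum_split[of rest h] by eventually_elim (simp add: C_def Os_def Cons a algebra_simps)
    have lenO: "length Os < length xs" unfolding Os_def Cons
      by (simp add: le_imp_less_Suc)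
    have PO: "\<forall>p\<in>set Os. P (snd p)" using "1.prems" by (auto simp: Os_def Cons)
    have hP: "P h" using "1.prems" by (auto simp: Cons a)
    have hpos: "\<forall>\<^sub>F x in at_top. h x > 0" using top_pos[OF top[OF hP]] .
    have hin: "h \<in> snd ` set xs" by (force simp: Cons a)
    have Osub: "snd ` set Os \<subseteq> snd ` set xs" by (auto simp: Os_def Cons)
    from "1.IH" lenO PO have IHO: "(\<forall>\<^sub>F x in at_top. lsum Os x = 0) \<or>
     (\<exists>c h. c \<noteq> 0 \<and> h \<in> snd ` set Os \<and> ((\<lambda>x. lsum Os x / h x) \<longlongrightarrow> c) at_top)" by blast
    show ?thesis
    proof (cases "\<forall>\<^sub>F x in at_top. lsum Os x = 0")
      case True
      show ?thesis
      proof (cases "C = 0")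
        case True
        have "\<forall>\<^sub>F x in at_top. lsum xs x = 0"
          using ev \<open>\<forall>\<^sub>F x in at_top. lsum Os x = 0\<close> by eventually_elim (simp add: True)
        then show ?thesis by blast
      next
        case False
        have e: "\<forall>\<^sub>F x in at_top. C = lsum xs x / h x"
          using ev \<open>\<forall>\<^sub>F x in at_top. lsum Os x = 0\<close> hpos by eventually_elim simp
        have "((\<lambda>x. lsum xs x / h x) \<longlongrightarrow> C) at_top"
          using tendsto_cong[OF e] tendsto_const by blast
        then show ?thesis using False hin by blast
      qed
    next
      case False
      with IHO obtain c2 h2 where c2: "c2 \<noteq> 0" and h2: "h2 \<in> snd ` set Os"
        and lim2: "((\<lambda>x. lsum Os x / h2 x) \<longlongrightarrow> c2) at_top" by blast
      have ns: "\<not> same_germ h2 h" using h2 by (auto simp: Os_def)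
      have h2P: "P h2" using h2 PO by auto
      have h2pos: "\<forall>\<^sub>F x in at_top. h2 x > 0" using top_pos[OF top[OF h2P]] .
      have h2in: "h2 \<in> snd ` set xs" using h2 Osub by blast
      show ?thesis
      proof (cases "C = 0")
        case True
        have e: "\<forall>\<^sub>F x in at_top. lsum Os x / h2 x = lsum xs x / h2 x"
          using ev by eventually_elim (simp add: True)
        show ?thesis using tendsto_cong[OF e] lim2 c2 h2in by blast
      next
        case CnZ: False
        from cm[OF hP h2P] consider
          (inf) "filterlim (\<lambda>x. h x / h2 x) at_top at_top"
          | (zero) "((\<lambda>x. h x / h2 x) \<longlongrightarrow> 0) at_top" | (eq) "same_germ h h2"
          unfolding cmp_def by blast
        then show ?thesis
        proof cases
          case inf
          have i0: "((\<lambda>x. inverse (h x / h2 x)) \<longlongrightarrow> 0) at_top"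
            by (rule tendsto_inverse_0_at_top[OF inf])
          have "((\<lambda>x. C + (lsum Os x / h2 x) * inverse (h x / h2 x)) \<longlongrightarrow> C + c2 * 0) at_top"
            by (intro tendsto_intros lim2 i0)
          then have l: "((\<lambda>x. C + (lsum Os x / h2 x) * inverse (h x / h2 x)) \<longlongrightarrow> C) at_top" by simp
          have e: "\<forall>\<^sub>F x in at_top. C + (lsum Os x / h2 x) * inverse (h x / h2 x) = lsum xs x / h x"
            using ev hpos h2pos by eventually_elim (simp add: field_simps)
          from l have "((\<lambda>x. lsum xs x / h x) \<longlongrightarrow> C) at_top"
            by (simp only: tendsto_cong[OF e])
          then show ?thesis using CnZ hin by blast
        next
          case zero
          have "((\<lambda>x. C * (h x / h2 x) + lsum Os x / h2 x) \<longlongrightarrow> C * 0 + c2) at_top"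
            by (intro tendsto_intros lim2 zero)
          then have l: "((\<lambda>x. C * (h x / h2 x) + lsum Os x / h2 x) \<longlongrightarrow> c2) at_top" by simp
          have e: "\<forall>\<^sub>F x in at_top. C * (h x / h2 x) + lsum Os x / h2 x = lsum xs x / h2 x"
            using ev hpos h2pos by eventually_elim (simp add: field_simps)
          from l have "((\<lambda>x. lsum xs x / h2 x) \<longlongrightarrow> c2) at_top"
            by (simp only: tendsto_cong[OF e])
          then show ?thesis using c2 h2in by blast
        next
          case eq then show ?thesis using ns sg_sym by blast
        qed
      qed
    qed
  qed
qed

lemma G2:
  assumes top: "\<And>h. P h \<Longrightarrow> filterlim h at_top at_top"
    and cm: "\<And>f g. P f \<Longrightarrow> P g \<Longrightarrow> cmp f g"
    and L: "LinL P w"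
  shows "filterlim w at_top at_top \<or> filterlim w at_bot at_top \<or> (\<forall>\<^sub>F x in at_top. w x = 0)"
proof -
  obtain xs where a: "\<forall>p\<in>set xs. P (snd p)" and b: "\<forall>\<^sub>F x in at_top. w x = lsum xs x"
    using L unfolding LinL_def by blast
  from G[OF top cm a] show ?thesis
  proof
    assume "\<forall>\<^sub>F x in at_top. lsum xs x = 0"
    with b have "\<forall>\<^sub>F x in at_top. w x = 0" by eventually_elim simp
    then show ?thesis by blast
  next
    assume "\<exists>c h. c \<noteq> 0 \<and> h \<in> snd ` set xs \<and> ((\<lambda>x. lsum xs x / h x) \<longlongrightarrow> c) at_top"
    then obtain c h where c: "c \<noteq> 0" and h: "h \<in> snd ` set xs" and lim: "((\<lambda>x. lsum xs x / h x) \<longlongrightarrow> c) at_top"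
      by blast
    have hP: "P h" using h a by auto
    have ht: "filterlim h at_top at_top" by (rule top[OF hP])
    have e: "\<forall>\<^sub>F x in at_top. lsum xs x / h x * h x = w x"
      using b top_pos[OF ht] by eventually_elim simp
    show ?thesis
    proof (cases "c > 0")
      case True
      have "filterlim (\<lambda>x. lsum xs x / h x * h x) at_top at_top"
        by (rule filterlim_tendsto_pos_mult_at_top[OF lim True ht])
      then show ?thesis using filterlim_cong[OF refl refl e] by blast
    next
      case False
      then have "c < 0" using c by simp
      have "filterlim (\<lambda>x. lsum xs x / h x * h x) at_bot at_top"
        by (rule filterlim_tendsto_neg_mult_at_bot[OF lim \<open>c < 0\<close> ht])
      then show ?thesis using filterlim_cong[OF refl refl e] by blast
    qed
  qed
qed

lemma LinL_cong: "LinL P u \<Longrightarrow> (\<forall>\<^sub>F x in at_top. w x = u x) \<Longrightarrow> LinL P w"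
  by (rule LinL_scale[where a=1]) simp_all

lemma Hd_pos: "Hd n f \<Longrightarrow> \<forall>\<^sub>F x in at_top. f x > 0"
  by (rule top_pos[OF Hd_top])

lemma Hd_ln: "Hd n f \<Longrightarrow> LinL (Hd (n - 1)) (\<lambda>x. ln (f x))"
proof (induction rule: Hd.induct)
  case (hd_ln n k)
  show ?case by (rule LinL_single[where h="ln ^^ Suc k" and c=1]) (rule Hd.hd_ln, simp)
next
  case (hd_exp n f)
  show ?case by (rule LinL_single[where h=f and c=1]) (auto intro: hd_exp.hyps)
next
  case (hd_pow n f \<alpha>)
  have "LinL (Hd n) (\<lambda>x. ln (f x))" using hd_pow.IH by (rule LinL_mono) (auto intro: hd_mono)
  then have "LinL (Hd n) (\<lambda>x. ln (f x powr \<alpha>))"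
    by (rule LinL_scale[where a=\<alpha>]) (use hd_pow.hyps(2) in \<open>eventually_elim, simp add: ln_powr\<close>)
  then show ?case by simp
next
  case (hd_mult n f g)
  have a: "LinL (Hd n) (\<lambda>x. ln (f x))" using hd_mult.IH(1) by (rule LinL_mono) (auto intro: hd_mono)
  have b: "LinL (Hd n) (\<lambda>x. ln (g x))" using hd_mult.IH(2) by (rule LinL_mono) (auto intro: hd_mono)
  have "\<forall>\<^sub>F x in at_top. ln (f x * g x) = ln (f x) + ln (g x)"
    using Hd_pos[OF hd_mult.hyps(1)] Hd_pos[OF hd_mult.hyps(2)] by eventually_elim (simp add: ln_mult)
  then have "LinL (Hd n) (\<lambda>x. ln (f x * g x))" by (rule LinL_add[OF a b])
  then show ?case by simp
next
  case (hd_div n f g)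
  have a: "LinL (Hd n) (\<lambda>x. ln (f x))" using hd_div.IH(1) by (rule LinL_mono) (auto intro: hd_mono)
  have b: "LinL (Hd n) (\<lambda>x. ln (g x))" using hd_div.IH(2) by (rule LinL_mono) (auto intro: hd_mono)
  have b': "LinL (Hd n) (\<lambda>x. - ln (g x))" using b by (rule LinL_scale[where a="-1"]) simp
  have "\<forall>\<^sub>F x in at_top. ln (f x / g x) = ln (f x) + - ln (g x)"
    using Hd_pos[OF hd_div.hyps(1)] Hd_pos[OF hd_div.hyps(2)] by eventually_elim (simp add: ln_div)
  then have "LinL (Hd n) (\<lambda>x. ln (f x / g x))" by (rule LinL_add[OF a b'])
  then show ?case by simp
next
  case (hd_germ n f g)
  show ?case using hd_germ.IH by (rule LinL_cong) (use hd_germ.hyps(2) in \<open>auto simp: same_germ_def elim: eventually_mono\<close>)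
next
  case (hd_suc n f)
  show ?case using hd_suc.IH by (rule LinL_mono) (auto intro: hd_mono)
qed

lemma Hd_cmp: "Hd n f \<Longrightarrow> Hd n g \<Longrightarrow> cmp f g"
proof (induction n arbitrary: f g)
  case 0
  obtain k j where "same_germ (ln ^^ k) f" "same_germ (ln ^^ j) g"
    using Hd_zero[OF "0.prems"(1)] Hd_zero[OF "0.prems"(2)] by blast
  then show ?case using cmp_germ[OF base_cmp] by blast
next
  case (Suc n)
  have a: "LinL (Hd n) (\<lambda>x. ln (f x))" using Hd_ln[OF Suc.prems(1)] by simp
  have b: "LinL (Hd n) (\<lambda>x. ln (g x))" using Hd_ln[OF Suc.prems(2)] by simp
  have b': "LinL (Hd n) (\<lambda>x. - ln (g x))" using b by (rule LinL_scale[where a="-1"]) simp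
  have d: "LinL (Hd n) (\<lambda>x. ln (f x) - ln (g x))" by (rule LinL_add[OF a b']) simp
  have fp: "\<forall>\<^sub>F x in at_top. f x > 0" by (rule Hd_pos[OF Suc.prems(1)])
  have gp: "\<forall>\<^sub>F x in at_top. g x > 0" by (rule Hd_pos[OF Suc.prems(2)])
  have e: "\<forall>\<^sub>F x in at_top. exp (ln (f x) - ln (g x)) = f x / g x"
    using fp gp by eventually_elim (simp add: exp_diff)
  have top': "\<And>h. Hd n h \<Longrightarrow> filterlim h at_top at_top" by (rule Hd_top)
  have cm': "\<And>f g. Hd n f \<Longrightarrow> Hd n g \<Longrightarrow> cmp f g" by (rule Suc.IH)
  from G2[of "Hd n", OF top' cm' d] consider
    (i) "filterlim (\<lambda>x. ln (f x) - ln (g x)) at_top at_top"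
    | (b) "filterlim (\<lambda>x. ln (f x) - ln (g x)) at_bot at_top"
    | (z) "\<forall>\<^sub>F x in at_top. ln (f x) - ln (g x) = 0" by blast
  then show ?case
  proof cases
    case i
    have "filterlim (\<lambda>x. exp (ln (f x) - ln (g x))) at_top at_top"
      by (rule filterlim_compose[OF exp_at_top i])
    then show ?thesis unfolding cmp_def using filterlim_cong[OF refl refl e] by blast
  next
    case b
    have "filterlim (\<lambda>x. exp (ln (f x) - ln (g x))) (nhds 0) at_top"
      by (rule filterlim_compose[OF exp_at_bot b])
    then show ?thesis unfolding cmp_def using tendsto_cong[OF e] by blast
  next
    case z
    have "same_germ f g" unfolding same_germ_def using z fp gp by eventually_elim simp
    then show ?thesis unfolding cmp_def by blast
  qed
qed

theorem mainTheorem3: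
  fixes f g :: "real \<Rightarrow> real"
  assumes "Hclass f" and "Hclass g" and "\<not> same_germ f g"
  shows "\<not> (\<exists>M>0. \<forall>\<^sub>F x in at_top. \<bar>f x\<bar> \<le> M * \<bar>g x\<bar> \<and> \<bar>g x\<bar> \<le> M * \<bar>f x\<bar>)"
proof
  assume "\<exists>M>0. \<forall>\<^sub>F x in at_top. \<bar>f x\<bar> \<le> M * \<bar>g x\<bar> \<and> \<bar>g x\<bar> \<le> M * \<bar>f x\<bar>"
  then obtain M where M: "M > 0" and B: "\<forall>\<^sub>F x in at_top. \<bar>f x\<bar> \<le> M * \<bar>g x\<bar> \<and> \<bar>g x\<bar> \<le> M * \<bar>f x\<bar>"
    by blast
  obtain n m where "Hd n f" "Hd m g" using Hclass_Hd assms(1,2) by blast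
  then have hf: "Hd (max n m) f" and hg: "Hd (max n m) g" by (auto intro: hd_mono)
  have fp: "\<forall>\<^sub>F x in at_top. f x > 0" by (rule Hd_pos[OF hf])
  have gp: "\<forall>\<^sub>F x in at_top. g x > 0" by (rule Hd_pos[OF hg])
  from Hd_cmp[OF hf hg] consider
    (i) "filterlim (\<lambda>x. f x / g x) at_top at_top"
    | (z) "((\<lambda>x. f x / g x) \<longlongrightarrow> 0) at_top" | (e) "same_germ f g"
    unfolding cmp_def by blast
  then show False
  proof cases
    case i
    then have "\<forall>\<^sub>F x in at_top. M + 1 \<le> f x / g x" unfolding filterlim_at_top by blast
    with B fp gp have "\<forall>\<^sub>F x::real in at_top. False"
    proof eventually_elim
      case (elim x)
      then have "f x \<le> M * g x" by simp
      then have "f x / g x \<le> M" using elim by (simp add: divide_le_eq)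
      then show ?case using elim by linarith
    qed
    then show False by simp
  next
    case z
    have "\<forall>\<^sub>F x in at_top. f x / g x < 1 / M"
      by (rule order_tendstoD(2)[OF z]) (simp add: M)
    with B fp gp have "\<forall>\<^sub>F x::real in at_top. False"
    proof eventually_elim
      case (elim x)
      then have "g x \<le> M * f x" by simp
      then have "1 / M \<le> f x / g x" using elim M by (simp add: field_simps)
      then show ?case using elim by linarith
    qed
    then show False by simp
  next
    case e then show False using assms(3) by blast
  qed
qed

end
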